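(* Let $W:\mathcal{X}\to\mathcal{Z}$ be a discrete memoryless channel and let $P_X\in\mathcal{P}_n(\mathcal{X})$. Let $\mathcal{C}_X$ be a codebook of size $M_X$ all of whose codewords lie in the type class $T_{P_X}$, with decoding sets (pairwise disjoint subsets of $\mathcal{Z}^n$), and suppose the distinct sequences in $\mathcal{C}_X$ are $\mathbf{x}_1,\dots,\mathbf{x}_M$, with $\mathbf{x}_i$ occurring $N_i$ times, $M_X=N_1+\cdots+N_M$, and $N_M\ge 2$. If $M_X\le|T_{P_X}|-1$, then there exist a sequence $\mathbf{x}\in T_{P_X}\setminus\{\mathbf{x}_1,\dots,\mathbf{x}_M\}$ and a codebook $\mathcal{C}'_X$ with decoding sets such that $|\mathcal{C}'_X|=|\mathcal{C}_X|$, $\mathcal{C}'_X$ contains $\mathbf{x}_i$ exactly $N'_i=N_i$ times for $i=1,\dots,M-1$, contains $\mathbf{x}_M$ exactly $N'_M=N_M-1$ times, contains $\mathbf{x}$ exactly once ($N'_{M+1}=1$), and $e(\mathcal{C}'_X,W)\le e(\mathcal{C}_X,W)$.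
   Context: $T_{P_X}$ denotes the set of sequences in $\mathcal{X}^n$ of type $P_X$, i.e. with empirical distribution $P_X$. For a single-user codebook $\mathcal{C}_X=(\mathbf{x}'_1,\dots,\mathbf{x}'_{M_X})$ (a list, possibly with repetitions) with pairwise disjoint decoding sets $D_1,\dots,D_{M_X}\subset\mathcal{Z}^n$, the average error probability is $e(\mathcal{C}_X,W)=\frac1{M_X}\sum_{m=1}^{M_X}W^n(D_m^c|\mathbf{x}'_m)$, where $W^n(\mathbf z|\mathbf x)=\prod_{t}W(z_t|x_t)$. *)

theory Defs
  imports Complex_Main
begin

definition seqs :: "nat \<Rightarrow> 'a list set" where
  "seqs n = {xs. length xs = n}"

(* discrete memoryless channel: stochastic matrix W x z = W(z|x) *)
definition is_channel :: "('x \<Rightarrow> 'z::finite \<Rightarrow> real) \<Rightarrow> bool" where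
  "is_channel W \<longleftrightarrow> (\<forall>x z. 0 \<le> W x z) \<and> (\<forall>x. (\<Sum>z\<in>UNIV. W x z) = 1)"

definition is_n_type :: "nat \<Rightarrow> ('x::finite \<Rightarrow> real) \<Rightarrow> bool" where
  "is_n_type n P \<longleftrightarrow> (\<forall>a. 0 \<le> P a) \<and> (\<Sum>a\<in>UNIV. P a) = 1
      \<and> (\<forall>a. \<exists>k::nat. real n * P a = real k)"

definition type_set :: "nat \<Rightarrow> ('x \<Rightarrow> real) \<Rightarrow> 'x list set" where
  "type_set n P = {xs. length xs = n \<and> (\<forall>a. real (count_list xs a) = real n * P a)}"

definition Wn :: "nat \<Rightarrow> ('x \<Rightarrow> 'z \<Rightarrow> real) \<Rightarrow> 'z list \<Rightarrow> 'x list \<Rightarrow> real" where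
  "Wn n W zs xs = (\<Prod>t<n. W (xs ! t) (zs ! t))"

definition valid_decoder :: "nat \<Rightarrow> 'x list list \<Rightarrow> (nat \<Rightarrow> 'z list set) \<Rightarrow> bool" where
  "valid_decoder n C D \<longleftrightarrow> (\<forall>m<length C. D m \<subseteq> seqs n)
      \<and> (\<forall>i<length C. \<forall>j<length C. i \<noteq> j \<longrightarrow> D i \<inter> D j = {})"

definition avg_error :: "nat \<Rightarrow> ('x \<Rightarrow> 'z \<Rightarrow> real) \<Rightarrow> 'x list list \<Rightarrow> (nat \<Rightarrow> 'z list set) \<Rightarrow> real" where
  "avg_error n W C D = (1 / real (length C)) *
     (\<Sum>m<length C. \<Sum>zs\<in>seqs n - D m. Wn n W zs (C ! m))"

end

theory Submission
  imports Defs
begin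

lemma count_list_update:
  "j < length xs \<Longrightarrow> count_list (xs[j:=x]) y =
     count_list xs y - (if xs!j=y then 1 else 0) + (if x=y then 1 else 0)"
proof (induction xs arbitrary: j)
  case Nil then show ?case by simp
next
  case (Cons a xs)
  show ?case
  proof (cases j)
    case 0 then show ?thesis by auto
  next
    case (Suc k)
    with Cons have "k < length xs" by simp
    have "count_list xs (xs ! k) \<noteq> 0" using nth_mem[OF \<open>k < length xs\<close>]
      by (simp add: count_list_0_iff)
    with Cons.IH[OF \<open>k < length xs\<close>] Suc show ?thesis
      by auto
  qed
qed

lemma finite_seqs: "finite (seqs n :: 'a::finite list set)"
  unfolding seqs_def using finite_lists_length_eq[of "UNIV::'a set" n] by simp

lemma seqs_Suc: "seqs (Suc n) = (\<lambda>(z,zs). z#zs) ` (UNIV \<times> seqs n)"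
  unfolding seqs_def
  by (auto simp: image_def length_Suc_conv)

lemma Wn_Cons: "Wn (Suc n) W (z#zs) (x#xs) = W x z * Wn n W zs xs"
  unfolding Wn_def by (simp only: prod.lessThan_Suc_shift) simp

lemma sum_Wn:
  fixes W :: "'x \<Rightarrow> 'z::finite \<Rightarrow> real"
  assumes "is_channel W"
  shows "length xs = n \<Longrightarrow> (\<Sum>zs\<in>seqs n. Wn n W zs xs) = 1"
proof (induction xs arbitrary: n)
  case Nil then show ?case by (simp add: seqs_def Wn_def)
next
  case (Cons x xs)
  then obtain m where n: "n = Suc m" and m: "length xs = m" by auto
  have inj: "inj_on (\<lambda>(z,zs). z#zs) (UNIV \<times> seqs m :: ('z \<times> 'z list) set)"
    by (auto simp: inj_on_def)
  have "(\<Sum>zs\<in>seqs n. Wn n W zs (x#xs)) =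
        (\<Sum>p\<in>UNIV \<times> seqs m. Wn (Suc m) W (fst p # snd p) (x#xs))"
    unfolding n seqs_Suc by (subst sum.reindex[OF inj]) (simp add: case_prod_beta)
  also have "\<dots> = (\<Sum>z\<in>UNIV. \<Sum>zs\<in>seqs m. W x z * Wn m W zs xs)"
    by (simp add: Wn_Cons sum.cartesian_product case_prod_beta)
  also have "\<dots> = (\<Sum>z\<in>UNIV. W x z)"
    by (simp add: sum_distrib_left[symmetric] Cons.IH[OF m])
  also have "\<dots> = 1" using assms unfolding is_channel_def by simp
  finally show ?case .
qed

theorem lemma3:
  fixes W :: "'x::finite \<Rightarrow> 'z::finite \<Rightarrow> real"
    and P :: "'x \<Rightarrow> real"
    and n :: nat
    and C :: "'x list list"
    and D :: "nat \<Rightarrow> 'z list set"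
    and xs :: "'x list list"
    and N :: "nat \<Rightarrow> nat"
  assumes chan: "is_channel W"
    and ntype: "is_n_type n P"
    and inT: "set C \<subseteq> type_set n P"
    and dec: "valid_decoder n C D"
    and dist: "distinct xs"
    and setC: "set C = set xs"
    and Mpos: "length xs \<ge> 1"
    and mult: "\<forall>i<length xs. count_list C (xs ! i) = N i"
    and NM: "N (length xs - 1) \<ge> 2"
    and size: "length C \<le> card (type_set n P) - 1"
  shows "\<exists>x C' D'. x \<in> type_set n P - set xs
     \<and> valid_decoder n C' D'
     \<and> length C' = length C
     \<and> (\<forall>i<length xs - 1. count_list C' (xs ! i) = N i)
     \<and> count_list C' (xs ! (length xs - 1)) = N (length xs - 1) - 1
     \<and> count_list C' x = 1
     \<and> avg_error n W C' D' \<le> avg_error n W C D"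
proof -
  define L where "L = length C"
  define y where "y = xs ! (length xs - 1)"
  have fin: "finite (type_set n P)"
    by (rule finite_subset[OF _ finite_lists_length_eq[of "UNIV::'x set" n]])
       (auto simp: type_set_def)
  have "length xs = card (set C)" using setC dist by (simp add: distinct_card)
  also have "\<dots> \<le> L" unfolding L_def by (rule card_length)
  finally have lx: "length xs \<le> L" .
  with Mpos size have ct: "L < card (type_set n P)" unfolding L_def by linarith
  have "card (set xs) < card (type_set n P)" using lx ct dist by (simp add: distinct_card)
  moreover have "set xs \<subseteq> type_set n P" using inT setC by simp
  ultimately have "\<not> type_set n P \<subseteq> set xs"
    using card_mono[of "set xs" "type_set n P"] by auto
  then obtain x where x: "x \<in> type_set n P - set xs" by blast
  have cy: "count_list C y \<ge> 2" using mult NM Mpos unfolding y_def by auto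
  define A where "A = {i. i < L \<and> C ! i = y}"
  have "card A = count_list C y"
    unfolding A_def L_def count_list_eq_length_filter length_filter_conv_card
    by (simp add: eq_commute)
  with cy have cA: "card A \<ge> 2" by simp
  have finA: "finite A" unfolding A_def by simp
  have "A \<noteq> {}" using cA by auto
  then obtain i where i: "i \<in> A" by blast
  have "card (A - {i}) = card A - 1" using finA i by simp
  then have "card (A - {i}) \<ge> 1" using cA by simp
  then have "A - {i} \<noteq> {}" by (metis card.empty not_one_le_zero)
  then obtain j where j: "j \<in> A - {i}" by blast
  have iL: "i < L" and Ci: "C ! i = y" using i by (auto simp: A_def)
  have jL: "j < L" and Cj: "C ! j = y" and ij: "i \<noteq> j" using j by (auto simp: A_def)
  define C' where "C' = C[j := x]"
  define D' where "D' = (\<lambda>m. if m = i then D i \<union> D j else if m = j then {} else D m)"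
  have xne: "x \<noteq> y" using x Mpos unfolding y_def by auto
  have lenC': "length C' = L" by (simp add: C'_def L_def)
  have cnt: "\<And>a. count_list C' a = count_list C a - (if y = a then 1 else 0) + (if x = a then 1 else 0)"
    unfolding C'_def using count_list_update[of j C x] jL Cj L_def by simp
  have xC: "x \<notin> set C" using x setC by simp
  have disj: "\<And>a b. a < L \<Longrightarrow> b < L \<Longrightarrow> a \<noteq> b \<Longrightarrow> D a \<inter> D b = {}"
    using dec unfolding valid_decoder_def L_def by blast
  have sub0: "\<And>a. a < L \<Longrightarrow> D a \<subseteq> seqs n"
    using dec unfolding valid_decoder_def L_def by blast
  have valid: "valid_decoder n C' D'"
    unfolding valid_decoder_def lenC'
  proof (intro conjI allI impI)
    fix a assume a: "a < L"
    show "D' a \<subseteq> seqs n" using sub0[OF a] sub0[OF iL] sub0[OF jL] unfolding D'_def by auto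
  next
    fix a b assume a: "a < L" and b: "b < L" and ab: "a \<noteq> b"
    show "D' a \<inter> D' b = {}"
      using a b ab iL jL ij
      by (cases "a=i"; cases "b=i"; cases "a=j"; cases "b=j")
         (simp_all add: D'_def Int_Un_distrib Int_Un_distrib2 disj)
  qed
  have cnt_i: "\<forall>k<length xs - 1. count_list C' (xs ! k) = N k"
  proof (intro allI impI)
    fix k assume k: "k < length xs - 1"
    have k1: "k < length xs" and k2: "length xs - 1 < length xs" "k \<noteq> length xs - 1" using k Mpos by auto
    have "xs ! k \<noteq> y" unfolding y_def using nth_eq_iff_index_eq[OF dist k1 k2(1)] k2(2) by simp
    moreover have "xs ! k \<noteq> x" using x nth_mem[OF k1] by auto
    ultimately show "count_list C' (xs ! k) = N k" using cnt mult k by simp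
  qed
  have cnt_y: "count_list C' y = N (length xs - 1) - 1"
    using cnt[of y] xne mult Mpos unfolding y_def by simp
  have cnt_x: "count_list C' x = 1" using cnt[of x] xne xC by simp
  define w where "w = (\<lambda>m. \<Sum>zs\<in>D m. Wn n W zs (C ! m))"
  define w' where "w' = (\<lambda>m. \<Sum>zs\<in>D' m. Wn n W zs (C' ! m))"
  have Dsub: "\<And>m. m < L \<Longrightarrow> D m \<subseteq> seqs n" using dec unfolding valid_decoder_def L_def by auto
  have lenT: "\<And>m. m < L \<Longrightarrow> length (C ! m) = n"
    using inT unfolding type_set_def L_def by (auto dest!: nth_mem)
  have lenC'T: "\<And>m. m < L \<Longrightarrow> length (C' ! m) = n"
  proof -
    fix m assume m: "m < L"
    have lx: "length x = n" using x unfolding type_set_def by simp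
    show "length (C' ! m) = n"
      using lenT[OF m] lx m jL unfolding C'_def L_def by (cases "m = j") auto
  qed
  have E: "\<And>m. m < L \<Longrightarrow> (\<Sum>zs\<in>seqs n - D m. Wn n W zs (C ! m)) = 1 - w m"
  proof -
    fix m assume m: "m < L"
    have S: "(\<Sum>zs\<in>seqs n. Wn n W zs (C ! m)) = 1" using sum_Wn[OF chan lenT[OF m]] .
    show "(\<Sum>zs\<in>seqs n - D m. Wn n W zs (C ! m)) = 1 - w m"
      unfolding w_def using sum_diff[OF finite_seqs Dsub[OF m], of "\<lambda>zs. Wn n W zs (C ! m)"] S by simp
  qed
  have D'sub: "\<And>m. m < L \<Longrightarrow> D' m \<subseteq> seqs n"
    using valid unfolding valid_decoder_def lenC' by auto
  have E': "\<And>m. m < L \<Longrightarrow> (\<Sum>zs\<in>seqs n - D' m. Wn n W zs (C' ! m)) = 1 - w' m"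
  proof -
    fix m assume m: "m < L"
    have S: "(\<Sum>zs\<in>seqs n. Wn n W zs (C' ! m)) = 1" using sum_Wn[OF chan lenC'T[OF m]] .
    show "(\<Sum>zs\<in>seqs n - D' m. Wn n W zs (C' ! m)) = 1 - w' m"
      unfolding w'_def using sum_diff[OF finite_seqs D'sub[OF m], of "\<lambda>zs. Wn n W zs (C' ! m)"] S by simp
  qed
  have fD: "\<And>m. m < L \<Longrightarrow> finite (D m)" using Dsub finite_seqs finite_subset by blast
  have w'eq: "\<And>m. m < L \<Longrightarrow> w' m = w m + (if m = i then w j else 0) - (if m = j then w j else 0)"
  proof -
    fix m assume m: "m < L"
    show "w' m = w m + (if m = i then w j else 0) - (if m = j then w j else 0)"
    proof (cases "m = i")
      case True
      have dj: "D i \<inter> D j = {}" using dec ij iL jL unfolding valid_decoder_def L_def by auto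
      have "w' m = (\<Sum>zs\<in>D i \<union> D j. Wn n W zs y)"
        using True ij Ci unfolding w'_def D'_def C'_def by simp
      also have "\<dots> = w i + w j" unfolding w_def using Ci Cj fD iL jL dj
        by (simp add: sum.union_disjoint)
      finally show ?thesis using True ij by simp
    next
      case False
      then show ?thesis
        by (cases "m = j") (auto simp: w'_def w_def D'_def C'_def)
    qed
  qed
  have "(\<Sum>m<L. w' m) = (\<Sum>m<L. w m + (if m = i then w j else 0) - (if m = j then w j else 0))"
    using w'eq by simp
  also have "\<dots> = (\<Sum>m<L. w m)"
    using iL jL by (simp add: sum.distrib sum_subtractf)
  finally have sw: "(\<Sum>m<L. w' m) = (\<Sum>m<L. w m)" .
  have "avg_error n W C' D' = (1 / real L) * (\<Sum>m<L. 1 - w' m)"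
    unfolding avg_error_def lenC' using E' by simp
  also have "\<dots> = (1 / real L) * (\<Sum>m<L. 1 - w m)"
    using sw by (simp add: sum_subtractf)
  also have "\<dots> = avg_error n W C D"
    unfolding avg_error_def L_def[symmetric] using E by simp
  finally have err: "avg_error n W C' D' \<le> avg_error n W C D" by simp
  show ?thesis
    apply (rule exI[of _ x], rule exI[of _ C'], rule exI[of _ D'])
    using x valid lenC' cnt_i cnt_y cnt_x err unfolding L_def y_def by auto
qed

end
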